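(* Let $\mathbb{F}$ be an algebraically closed field of characteristic $0$, $D$ an $\mathbb{F}$-vector space with $\dim D=3$, and $\Gamma\subseteq D^{\ast}$ an additive subgroup with $\Gamma\simeq\mathbb{Z}^3$ and $\bigcap_{\alpha\in\Gamma}\ker\alpha=\{0\}$. Let $M=\bigoplus_{\theta\in\Gamma}M_\theta$ be a $\Gamma$-graded $\mathcal{S}(\Gamma,D)$-module with $\dim M_\theta=1$, $M_\theta=\mathbb{F}w_\theta$. Fix a $\mathbb{Z}$-basis $\{\varepsilon_1,\varepsilon_2,\varepsilon_3\}$ of $\Gamma$ and nonzero $\partial_1\in\ker\varepsilon_2\cap\ker\varepsilon_3$, $\partial_2\in\ker\varepsilon_1\cap\ker\varepsilon_3$, $\partial_3\in\ker\varepsilon_1\cap\ker\varepsilon_2$. Then there exists $\nu\in\Gamma$ satisfying at least one of the following six conditions: (a) $x^{-\varepsilon_2}\partial_1.x^{\varepsilon_2}\partial_1.w_\nu\neq0$ and $x^{-\varepsilon_3}\partial_1.x^{\varepsilon_3}\partial_1.w_\nu\neq0$; (b) $x^{-\varepsilon_1}\partial_2.x^{\varepsilon_1}\partial_2.w_\nu\neq0$ and $x^{-\varepsilon_3}\partial_2.x^{\varepsilon_3}\partial_2.w_\nu\neq0$; (c) $x^{-\varepsilon_1}\partial_3.x^{\varepsilon_1}\partial_3.w_\nu\neq0$ and $x^{-\varepsilon_2}\partial_3.x^{\varepsilon_2}\partial_3.w_\nu\neq0$; (a') $x^{-\varepsilon_3}\partial_1.x^{\varepsilon_3}\partial_1.w_\nu=0$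 and $x^{-\varepsilon_3}\partial_2.x^{\varepsilon_3}\partial_2.w_\nu=0$; (b') $x^{-\varepsilon_1}\partial_2.x^{\varepsilon_1}\partial_2.w_\nu=0$ and $x^{-\varepsilon_1}\partial_3.x^{\varepsilon_1}\partial_3.w_\nu=0$; (c') $x^{-\varepsilon_2}\partial_1.x^{\varepsilon_2}\partial_1.w_\nu=0$ and $x^{-\varepsilon_2}\partial_3.x^{\varepsilon_2}\partial_3.w_\nu=0$.
   Context: $\mathcal{S}(\Gamma,D)$ is the Lie algebra spanned by $x^\alpha\partial$ with $\alpha\in\Gamma\setminus\{0\}$, $\partial\in\ker\alpha$ (linear in $\partial$), with bracket $[x^\alpha\partial_1,x^\beta\partial_2]=x^{\alpha+\beta}(\beta(\partial_1)\partial_2-\alpha(\partial_2)\partial_1)$; graded modules satisfy $x^\alpha\partial.M_\theta\subseteq M_{\alpha+\theta}$. *)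

theory Defs
  imports Main "HOL-Computational_Algebra.Polynomial"
begin

definition alg_closed_field :: "'a::field itself \<Rightarrow> bool" where
  "alg_closed_field _ \<longleftrightarrow> (\<forall>p :: 'a poly. degree p \<ge> 1 \<longrightarrow> (\<exists>x. poly p x = 0))"

text \<open>A module over S(Gamma,D) on the F-vector space M
  (scalar multiplication scM) is given by the action act alpha d m of the
  spanning elements x^alpha d (alpha in Gamma nonzero, d in ker alpha) on M,
  which is linear in m, linear in d, and respects the Lie bracket
  [x^a d1, x^b d2] = x^(a+b) (b(d1) d2 - a(d2) d1).
  (If a+b = 0 the bracket vector b(d1) d2 - a(d2) d1 is 0, so the bracket is 0.)\<close>
definition S_module ::
  "('a::field \<Rightarrow> 'd::ab_group_add \<Rightarrow> 'd) \<Rightarrow> ('d \<Rightarrow> 'a) set \<Rightarrow>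
   ('a \<Rightarrow> 'm::ab_group_add \<Rightarrow> 'm) \<Rightarrow> (('d \<Rightarrow> 'a) \<Rightarrow> 'd \<Rightarrow> 'm \<Rightarrow> 'm) \<Rightarrow> bool" where
  "S_module scD G scM act \<longleftrightarrow>
     vector_space scM \<and>
     (\<forall>\<alpha>\<in>G. \<forall>d. \<alpha> \<noteq> (\<lambda>_. 0) \<and> \<alpha> d = 0 \<longrightarrow> Vector_Spaces.linear scM scM (act \<alpha> d)) \<and>
     (\<forall>\<alpha>\<in>G. \<forall>d1 d2 c m. \<alpha> \<noteq> (\<lambda>_. 0) \<and> \<alpha> d1 = 0 \<and> \<alpha> d2 = 0 \<longrightarrow>
        act \<alpha> (d1 + d2) m = act \<alpha> d1 m + act \<alpha> d2 m \<and>
        act \<alpha> (scD c d1) m = scM c (act \<alpha> d1 m)) \<and>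
     (\<forall>\<alpha>\<in>G. \<forall>\<beta>\<in>G. \<forall>d1 d2 m.
        \<alpha> \<noteq> (\<lambda>_. 0) \<and> \<beta> \<noteq> (\<lambda>_. 0) \<and> \<alpha> d1 = 0 \<and> \<beta> d2 = 0 \<longrightarrow>
        act \<alpha> d1 (act \<beta> d2 m) - act \<beta> d2 (act \<alpha> d1 m) =
          (if (\<lambda>x. \<alpha> x + \<beta> x) = (\<lambda>_. 0) then 0
           else act (\<lambda>x. \<alpha> x + \<beta> x) (scD (\<beta> d1) d2 - scD (\<alpha> d2) d1) m))"

definition graded_dim1 ::
  "('d::ab_group_add \<Rightarrow> 'a::field) set \<Rightarrow> ('a \<Rightarrow> 'm::ab_group_add \<Rightarrow> 'm) \<Rightarrow>
   (('d \<Rightarrow> 'a) \<Rightarrow> 'd \<Rightarrow> 'm \<Rightarrow> 'm) \<Rightarrow> (('d \<Rightarrow> 'a) \<Rightarrow> 'm) \<Rightarrow> bool" where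
  "graded_dim1 G scM act w \<longleftrightarrow>
     (\<forall>\<theta>\<in>G. w \<theta> \<noteq> 0) \<and> inj_on w G \<and>
     module.independent scM (w ` G) \<and> module.span scM (w ` G) = UNIV \<and>
     (\<forall>\<alpha>\<in>G. \<forall>d. \<forall>\<theta>\<in>G. \<alpha> \<noteq> (\<lambda>_. 0) \<and> \<alpha> d = 0 \<longrightarrow>
        act \<alpha> d (w \<theta>) \<in> module.span scM {w (\<lambda>x. \<alpha> x + \<theta> x)})"

end

theory Submission
  imports Defs
begin

locale smod =
  fixes scD :: "'a::field \<Rightarrow> 'd::ab_group_add \<Rightarrow> 'd"
    and G :: "('d \<Rightarrow> 'a) set"
    and scM :: "'a \<Rightarrow> 'm::ab_group_add \<Rightarrow> 'm"
    and act :: "('d \<Rightarrow> 'a) \<Rightarrow> 'd \<Rightarrow> 'm \<Rightarrow> 'm"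
    and w :: "('d \<Rightarrow> 'a) \<Rightarrow> 'm"
  assumes VD: "vector_space scD"
    and Glin: "\<And>\<alpha>. \<alpha> \<in> G \<Longrightarrow> Vector_Spaces.linear scD (*) \<alpha>"
    and Gadd: "\<And>\<alpha> \<beta>. \<alpha> \<in> G \<Longrightarrow> \<beta> \<in> G \<Longrightarrow> (\<lambda>x. \<alpha> x + \<beta> x) \<in> G"
    and Gneg: "\<And>\<alpha>. \<alpha> \<in> G \<Longrightarrow> (\<lambda>x. - \<alpha> x) \<in> G"
    and SM: "S_module scD G scM act"
    and GR: "graded_dim1 G scM act w"
begin

lemma VM: "vector_space scM" using SM by (simp add: S_module_def)

sublocale D: vector_space scD by (rule VD)
sublocale M: vector_space scM by (rule VM)

lemma SM_lin: "\<forall>\<alpha>\<in>G. \<forall>d. \<alpha> \<noteq> (\<lambda>_. 0) \<and> \<alpha> d = 0 \<longrightarrow> Vector_Spaces.linear scM scM (act \<alpha> d)"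
  using SM unfolding S_module_def by (elim conjE)
lemma SM_d: "\<forall>\<alpha>\<in>G. \<forall>d1 d2 c m. \<alpha> \<noteq> (\<lambda>_. 0) \<and> \<alpha> d1 = 0 \<and> \<alpha> d2 = 0 \<longrightarrow>
        act \<alpha> (d1 + d2) m = act \<alpha> d1 m + act \<alpha> d2 m \<and>
        act \<alpha> (scD c d1) m = scM c (act \<alpha> d1 m)"
  using SM unfolding S_module_def by (elim conjE)
lemma SM_br: "\<forall>\<alpha>\<in>G. \<forall>\<beta>\<in>G. \<forall>d1 d2 m.
        \<alpha> \<noteq> (\<lambda>_. 0) \<and> \<beta> \<noteq> (\<lambda>_. 0) \<and> \<alpha> d1 = 0 \<and> \<beta> d2 = 0 \<longrightarrow>
        act \<alpha> d1 (act \<beta> d2 m) - act \<beta> d2 (act \<alpha> d1 m) =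
          (if (\<lambda>x. \<alpha> x + \<beta> x) = (\<lambda>_. 0) then 0
           else act (\<lambda>x. \<alpha> x + \<beta> x) (scD (\<beta> d1) d2 - scD (\<alpha> d2) d1) m)"
  using SM unfolding S_module_def by (elim conjE)

lemma lin_add: "\<alpha> \<in> G \<Longrightarrow> \<alpha> (x + y) = \<alpha> x + \<alpha> y"
  using Glin[of \<alpha>] unfolding Vector_Spaces.linear_iff by blast
lemma lin_scale: "\<alpha> \<in> G \<Longrightarrow> \<alpha> (scD c x) = c * \<alpha> x"
  using Glin[of \<alpha>] unfolding Vector_Spaces.linear_iff by blast
lemma lin_zero: "\<alpha> \<in> G \<Longrightarrow> \<alpha> 0 = 0"
  using lin_scale[of \<alpha> 0 0] D.scale_zero_left by simp
lemma lin_diff: "\<alpha> \<in> G \<Longrightarrow> \<alpha> (x - y) = \<alpha> x - \<alpha> y"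
  using Glin module_hom.diff linear_iff_module_hom by metis

lemma act_scale:
  assumes "\<alpha> \<in> G" "\<alpha> \<noteq> (\<lambda>_. 0)" "\<alpha> d = 0"
  shows "act \<alpha> d (scM c m) = scM c (act \<alpha> d m)"
proof -
  have "Vector_Spaces.linear scM scM (act \<alpha> d)" using SM_lin assms by blast
  then show ?thesis unfolding Vector_Spaces.linear_iff by blast
qed

lemma act_dscale:
  assumes "\<alpha> \<in> G" "\<alpha> \<noteq> (\<lambda>_. 0)" "\<alpha> d = 0"
  shows "act \<alpha> (scD c d) m = scM c (act \<alpha> d m)"
  using SM_d assms by blast

lemma act_zero:
  assumes "\<alpha> \<in> G" "\<alpha> \<noteq> (\<lambda>_. 0)"
  shows "act \<alpha> 0 m = 0"
proof -
  have "act \<alpha> (scD 0 0) m = scM 0 (act \<alpha> 0 m)"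
    by (rule act_dscale[OF assms lin_zero[OF assms(1)]])
  then show ?thesis by simp
qed

lemma w_nz: "\<theta> \<in> G \<Longrightarrow> w \<theta> \<noteq> 0" using GR by (simp add: graded_dim1_def)

definition f where
  "f \<alpha> d \<theta> = (SOME c. act \<alpha> d (w \<theta>) = scM c (w (\<lambda>x. \<alpha> x + \<theta> x)))"

lemma f_eq:
  assumes "\<alpha> \<in> G" "\<theta> \<in> G" "\<alpha> \<noteq> (\<lambda>_. 0)" "\<alpha> d = 0"
  shows "act \<alpha> d (w \<theta>) = scM (f \<alpha> d \<theta>) (w (\<lambda>x. \<alpha> x + \<theta> x))"
proof -
  have "act \<alpha> d (w \<theta>) \<in> module.span scM {w (\<lambda>x. \<alpha> x + \<theta> x)}"
    using GR assms by (simp add: graded_dim1_def)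
  then have "\<exists>c. act \<alpha> d (w \<theta>) = scM c (w (\<lambda>x. \<alpha> x + \<theta> x))"
    using M.span_singleton by auto
  then show ?thesis unfolding f_def by (rule someI_ex)
qed

lemma scw_cancel: "\<theta> \<in> G \<Longrightarrow> scM a (w \<theta>) = scM b (w \<theta>) \<longleftrightarrow> a = b"
  using M.scale_cancel_right w_nz by simp

lemma scw_nz: "\<theta> \<in> G \<Longrightarrow> scM a (w \<theta>) \<noteq> 0 \<longleftrightarrow> a \<noteq> 0"
  using M.scale_eq_0_iff w_nz by simp

lemma two:
  assumes "\<alpha> \<in> G" "\<beta> \<in> G" "\<theta> \<in> G" "\<alpha> \<noteq> (\<lambda>_. 0)" "\<beta> \<noteq> (\<lambda>_. 0)" "\<alpha> d1 = 0" "\<beta> d2 = 0"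
  shows "act \<alpha> d1 (act \<beta> d2 (w \<theta>)) =
     scM (f \<beta> d2 \<theta> * f \<alpha> d1 (\<lambda>x. \<beta> x + \<theta> x)) (w (\<lambda>x. \<alpha> x + (\<beta> x + \<theta> x)))"
proof -
  have bt: "(\<lambda>x. \<beta> x + \<theta> x) \<in> G" using Gadd assms by blast
  show ?thesis
    using f_eq[OF assms(2,3,5,7)] f_eq[OF assms(1) bt assms(4,6)] act_scale[OF assms(1,4,6)]
      M.scale_scale by (simp add: mult.commute)
qed

lemma comm:
  assumes "\<alpha> \<in> G" "\<beta> \<in> G" "\<alpha> \<noteq> (\<lambda>_. 0)" "\<beta> \<noteq> (\<lambda>_. 0)" "\<alpha> d1 = 0" "\<beta> d2 = 0"
    "\<beta> d1 = 0" "\<alpha> d2 = 0"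
  shows "act \<alpha> d1 (act \<beta> d2 m) = act \<beta> d2 (act \<alpha> d1 m)"
proof -
  have "act \<alpha> d1 (act \<beta> d2 m) - act \<beta> d2 (act \<alpha> d1 m) =
          (if (\<lambda>x. \<alpha> x + \<beta> x) = (\<lambda>_. 0) then 0
           else act (\<lambda>x. \<alpha> x + \<beta> x) (scD (\<beta> d1) d2 - scD (\<alpha> d2) d1) m)"
    using SM_br assms by blast
  also have "\<dots> = 0"
    using assms act_zero[OF Gadd[OF assms(1,2)]] D.scale_zero_left by simp
  finally show ?thesis by simp
qed

lemma comm_coef:
  assumes "\<alpha> \<in> G" "\<beta> \<in> G" "\<theta> \<in> G" "\<alpha> \<noteq> (\<lambda>_. 0)" "\<beta> \<noteq> (\<lambda>_. 0)" "\<alpha> d1 = 0" "\<beta> d2 = 0"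
    "\<beta> d1 = 0" "\<alpha> d2 = 0"
  shows "f \<beta> d2 \<theta> * f \<alpha> d1 (\<lambda>x. \<beta> x + \<theta> x) = f \<alpha> d1 \<theta> * f \<beta> d2 (\<lambda>x. \<alpha> x + \<theta> x)"
proof -
  have P: "(\<lambda>x. \<alpha> x + (\<beta> x + \<theta> x)) \<in> G" using Gadd assms by blast
  have e: "(\<lambda>x. \<beta> x + (\<alpha> x + \<theta> x)) = (\<lambda>x. \<alpha> x + (\<beta> x + \<theta> x))"
    by (simp add: fun_eq_iff add_ac)
  show ?thesis
    using comm[OF assms(1,2,4-9), of "w \<theta>"] two[OF assms(1-7)] two[OF assms(2,1,3,5,4,7,6)] e
      scw_cancel[OF P] by simp
qed

lemma bracket_coef:
  assumes "\<alpha> \<in> G" "\<beta> \<in> G" "\<theta> \<in> G" "\<alpha> \<noteq> (\<lambda>_. 0)" "\<beta> \<noteq> (\<lambda>_. 0)" "\<alpha> d1 = 0" "\<beta> d2 = 0"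
    "(\<lambda>x. \<alpha> x + \<beta> x) \<noteq> (\<lambda>_. 0)"
  shows "f \<beta> d2 \<theta> * f \<alpha> d1 (\<lambda>x. \<beta> x + \<theta> x) - f \<alpha> d1 \<theta> * f \<beta> d2 (\<lambda>x. \<alpha> x + \<theta> x)
       = f (\<lambda>x. \<alpha> x + \<beta> x) (scD (\<beta> d1) d2 - scD (\<alpha> d2) d1) \<theta>"
proof -
  define V where "V = scD (\<beta> d1) d2 - scD (\<alpha> d2) d1"
  have ab: "(\<lambda>x. \<alpha> x + \<beta> x) \<in> G" using Gadd assms by blast
  have P: "(\<lambda>x. \<alpha> x + (\<beta> x + \<theta> x)) \<in> G" using Gadd assms by blast
  have V0: "(\<lambda>x. \<alpha> x + \<beta> x) V = 0"
    unfolding V_def using assms by (simp add: lin_diff lin_scale algebra_simps)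
  have br: "act \<alpha> d1 (act \<beta> d2 (w \<theta>)) - act \<beta> d2 (act \<alpha> d1 (w \<theta>)) =
           act (\<lambda>x. \<alpha> x + \<beta> x) V (w \<theta>)"
    using SM_br assms unfolding V_def by simp
  have e: "(\<lambda>x. \<beta> x + (\<alpha> x + \<theta> x)) = (\<lambda>x. \<alpha> x + (\<beta> x + \<theta> x))"
    by (simp add: fun_eq_iff add_ac)
  have e2: "(\<lambda>x. (\<alpha> x + \<beta> x) + \<theta> x) = (\<lambda>x. \<alpha> x + (\<beta> x + \<theta> x))"
    by (simp add: fun_eq_iff add_ac)
  have t1: "act \<alpha> d1 (act \<beta> d2 (w \<theta>)) =
     scM (f \<beta> d2 \<theta> * f \<alpha> d1 (\<lambda>x. \<beta> x + \<theta> x)) (w (\<lambda>x. \<alpha> x + (\<beta> x + \<theta> x)))"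
    by (rule two[OF assms(1-7)])
  have t2: "act \<beta> d2 (act \<alpha> d1 (w \<theta>)) =
     scM (f \<alpha> d1 \<theta> * f \<beta> d2 (\<lambda>x. \<alpha> x + \<theta> x)) (w (\<lambda>x. \<alpha> x + (\<beta> x + \<theta> x)))"
    using two[OF assms(2,1,3,5,4,7,6)] unfolding e .
  have t3: "act (\<lambda>x. \<alpha> x + \<beta> x) V (w \<theta>) =
     scM (f (\<lambda>x. \<alpha> x + \<beta> x) V \<theta>) (w (\<lambda>x. \<alpha> x + (\<beta> x + \<theta> x)))"
    using f_eq[OF ab assms(3,8) V0] unfolding e2 .
  have "scM (f \<beta> d2 \<theta> * f \<alpha> d1 (\<lambda>x. \<beta> x + \<theta> x) - f \<alpha> d1 \<theta> * f \<beta> d2 (\<lambda>x. \<alpha> x + \<theta> x))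
           (w (\<lambda>x. \<alpha> x + (\<beta> x + \<theta> x)))
      = scM (f (\<lambda>x. \<alpha> x + \<beta> x) V \<theta>) (w (\<lambda>x. \<alpha> x + (\<beta> x + \<theta> x)))"
    unfolding M.scale_left_diff_distrib t1[symmetric] t2[symmetric] t3[symmetric] by (rule br)
  then show ?thesis
    unfolding scw_cancel[OF P] V_def .
qed

lemma f_scale:
  assumes "\<alpha> \<in> G" "\<theta> \<in> G" "\<alpha> \<noteq> (\<lambda>_. 0)" "\<alpha> d = 0"
  shows "f \<alpha> (scD c d) \<theta> = c * f \<alpha> d \<theta>"
proof -
  have P: "(\<lambda>x. \<alpha> x + \<theta> x) \<in> G" using Gadd assms by blast
  have "\<alpha> (scD c d) = 0" using assms lin_scale[OF assms(1)] by simp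
  then have "scM (f \<alpha> (scD c d) \<theta>) (w (\<lambda>x. \<alpha> x + \<theta> x)) = scM (c * f \<alpha> d \<theta>) (w (\<lambda>x. \<alpha> x + \<theta> x))"
    using f_eq[OF assms(1-3)] f_eq[OF assms] act_dscale[OF assms(1,3,4)] M.scale_scale
    by metis
  then show ?thesis using scw_cancel[OF P] by simp
qed

definition Z where "Z \<alpha> p \<theta> = f \<alpha> p \<theta> * f (\<lambda>x. - \<alpha> x) p (\<lambda>x. \<alpha> x + \<theta> x)"

lemma neg_nz: "\<alpha> \<noteq> (\<lambda>_. 0) \<Longrightarrow> (\<lambda>x. - \<alpha> x) \<noteq> (\<lambda>_::'d. 0::'a)"
  by (auto simp: fun_eq_iff)

lemma Z_act:
  assumes "\<alpha> \<in> G" "\<theta> \<in> G" "\<alpha> \<noteq> (\<lambda>_. 0)" "\<alpha> p = 0"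
  shows "act (\<lambda>x. - \<alpha> x) p (act \<alpha> p (w \<theta>)) \<noteq> 0 \<longleftrightarrow> Z \<alpha> p \<theta> \<noteq> 0"
proof -
  have e: "(\<lambda>x. - \<alpha> x + (\<alpha> x + \<theta> x)) = \<theta>" by (simp add: fun_eq_iff)
  show ?thesis
    using two[OF Gneg[OF assms(1)] assms(1,2) neg_nz[OF assms(3)] assms(3), of p p] assms(4) e
      scw_nz[OF assms(2)] unfolding Z_def by (simp add: mult.commute)
qed

lemma Z_shift:
  assumes "\<alpha> \<in> G" "\<theta> \<in> G" "\<alpha> \<noteq> (\<lambda>_. 0)" "\<alpha> p = 0"
  shows "Z \<alpha> p (\<lambda>x. \<alpha> x + \<theta> x) = Z \<alpha> p \<theta>"
proof -
  have at: "(\<lambda>x. \<alpha> x + \<theta> x) \<in> G" using Gadd assms by blast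
  have e: "(\<lambda>x. - \<alpha> x + (\<alpha> x + \<theta> x)) = \<theta>" by (simp add: fun_eq_iff)
  have "f (\<lambda>x. - \<alpha> x) p (\<lambda>x. \<alpha> x + \<theta> x) * f \<alpha> p (\<lambda>x. - \<alpha> x + (\<alpha> x + \<theta> x)) =
        f \<alpha> p (\<lambda>x. \<alpha> x + \<theta> x) * f (\<lambda>x. - \<alpha> x) p (\<lambda>x. \<alpha> x + (\<alpha> x + \<theta> x))"
    using comm_coef[OF assms(1) Gneg[OF assms(1)] at assms(3) neg_nz[OF assms(3)], of p p] assms(4)
    by simp
  then show ?thesis unfolding Z_def e by (simp add: mult.commute)
qed


lemma Gdiff: "\<alpha> \<in> G \<Longrightarrow> \<beta> \<in> G \<Longrightarrow> (\<lambda>x. \<alpha> x - \<beta> x) \<in> G"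
  using Gadd[OF _ Gneg, of \<alpha> \<beta>] by simp

lemma core:
  assumes aG: "a \<in> G" and bG: "b \<in> G" and nG: "\<nu> \<in> G"
    and a1: "a p1 = 0" and b1: "b p1 = 0" and b2: "b p2 = 0" and a3: "a p3 = 0"
    and a2: "a p2 \<noteq> 0" and b3: "b p3 \<noteq> 0"
    and h1: "Z a p1 \<nu> \<noteq> 0"
    and h1': "Z a p1 (\<lambda>x. \<nu> x - a x) \<noteq> 0"
    and h2: "Z b p2 (\<lambda>x. \<nu> x + a x - b x) \<noteq> 0"
    and h3: "Z a p1 (\<lambda>x. \<nu> x + b x - a x) \<noteq> 0"
    and h4: "Z b p2 (\<lambda>x. \<nu> x + b x - a x) \<noteq> 0"
  shows "Z b p1 \<nu> \<noteq> 0"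
proof -
  have a0: "a \<noteq> (\<lambda>_. 0)" using a2 by auto
  have b0: "b \<noteq> (\<lambda>_. 0)" using b3 by auto
  have na0: "(\<lambda>x. - a x) \<noteq> (\<lambda>_. 0)" using a2 by (auto simp: fun_eq_iff)
  have nb0: "(\<lambda>x. - b x) \<noteq> (\<lambda>_. 0)" using b3 by (auto simp: fun_eq_iff)
  have amb0: "(\<lambda>x. a x - b x) \<noteq> (\<lambda>_. 0)"
  proof
    assume "(\<lambda>x. a x - b x) = (\<lambda>_. 0)"
    then have "a p2 - b p2 = 0" by metis
    then show False using a2 b2 by simp
  qed
  have bma0: "(\<lambda>x. b x - a x) \<noteq> (\<lambda>_. 0)"
  proof
    assume "(\<lambda>x. b x - a x) = (\<lambda>_. 0)"
    then have "b p2 - a p2 = 0" by metis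
    then show False using a2 b2 by simp
  qed
  have naG: "(\<lambda>x. - a x) \<in> G" using Gneg aG by blast
  have nbG: "(\<lambda>x. - b x) \<in> G" using Gneg bG by blast
  have ambG: "(\<lambda>x. a x - b x) \<in> G" using Gdiff aG bG by blast
  have bmaG: "(\<lambda>x. b x - a x) \<in> G" using Gdiff aG bG by blast
  define D where "D = scD (b p3) p2 + scD (a p2) p3"
  define k where "k = a p2 * b p3"
  have k0: "k \<noteq> 0" using a2 b3 by (simp add: k_def)
  have bD: "b D = k" unfolding D_def k_def using lin_add[OF bG] lin_scale[OF bG] b2 by (simp add: mult.commute)
  have aD: "a D = k" unfolding D_def k_def using lin_add[OF aG] lin_scale[OF aG] a3 by (simp add: mult.commute)
  have ambD: "(\<lambda>x. a x - b x) D = 0" using aD bD by simp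
  have bmaD: "(\<lambda>x. b x - a x) D = 0" using aD bD by simp
  have F0: "f a p1 \<nu> \<noteq> 0" using h1 unfolding Z_def by simp
  have e_ab: "(\<lambda>x. b x + (a x - b x)) = a" by (simp add: fun_eq_iff)
  have br1: "f (\<lambda>x. a x - b x) D \<nu> * f b p1 (\<lambda>x. a x - b x + \<nu> x) - f b p1 \<nu> * f (\<lambda>x. a x - b x) D (\<lambda>x. b x + \<nu> x)
       = f a (scD ((\<lambda>x. a x - b x) p1) D - scD (b D) p1) \<nu>"
    using bracket_coef[OF bG ambG nG b0 amb0 b1 ambD, unfolded e_ab] a0 by simp
  have V1: "scD ((\<lambda>x. a x - b x) p1) D - scD (b D) p1 = scD (- k) p1"
    using a1 b1 bD by simp
  have "f a (scD (- k) p1) \<nu> = - k * f a p1 \<nu>" by (rule f_scale[OF aG nG a0 a1])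
  then have br1': "f (\<lambda>x. a x - b x) D \<nu> * f b p1 (\<lambda>x. a x - b x + \<nu> x) - f b p1 \<nu> * f (\<lambda>x. a x - b x) D (\<lambda>x. b x + \<nu> x) \<noteq> 0"
    using br1 V1 k0 F0 by simp
  have c0: "f b p1 \<nu> \<noteq> 0"
  proof (cases "f b p1 \<nu> = 0")
    case True
    define t1 where "t1 = (\<lambda>x. a x - b x + \<nu> x)"
    have t1G: "t1 \<in> G" unfolding t1_def using Gadd[OF ambG nG] by simp
    have ct1: "f b p1 t1 \<noteq> 0" using br1' True unfolding t1_def by auto
    have bt1G: "(\<lambda>x. b x + t1 x) \<in> G" using Gadd[OF bG t1G] .
    have et1: "(\<lambda>x. \<nu> x + a x - b x) = t1" by (simp add: t1_def fun_eq_iff)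
    have gm: "f (\<lambda>x. - b x) p2 (\<lambda>x. b x + t1 x) \<noteq> 0" using h2 unfolding et1 Z_def by simp
    have e1: "(\<lambda>x. - b x + (b x + t1 x)) = t1" by (simp add: fun_eq_iff)
    have cc: "f (\<lambda>x. - b x) p2 (\<lambda>x. b x + t1 x) * f b p1 t1 =
              f b p1 (\<lambda>x. b x + t1 x) * f (\<lambda>x. - b x) p2 (\<lambda>x. b x + (b x + t1 x))"
      using comm_coef[OF bG nbG bt1G b0 nb0 b1, of p2] b1 b2 unfolding e1 by simp
    have c2: "f b p1 (\<lambda>x. b x + t1 x) \<noteq> 0" using cc gm ct1 by auto
    have et2: "(\<lambda>x. b x + t1 x) = (\<lambda>x. a x + \<nu> x)" by (simp add: t1_def fun_eq_iff)
    have cc2: "f b p1 \<nu> * f a p1 (\<lambda>x. b x + \<nu> x) = f a p1 \<nu> * f b p1 (\<lambda>x. a x + \<nu> x)"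
      using comm_coef[OF aG bG nG a0 b0 a1 b1 b1 a1] .
    show ?thesis using cc2 c2 F0 unfolding et2 by auto
  qed simp
  define \<sigma> where "\<sigma> = (\<lambda>x. b x + \<nu> x)"
  define \<rho> where "\<rho> = (\<lambda>x. \<nu> x + b x - a x)"
  have sG: "\<sigma> \<in> G" unfolding \<sigma>_def using Gadd[OF bG nG] .
  have rG: "\<rho> \<in> G" unfolding \<rho>_def using Gdiff[OF Gadd[OF nG bG] aG] .
  have ear: "(\<lambda>x. a x + \<rho> x) = \<sigma>" by (simp add: \<rho>_def \<sigma>_def fun_eq_iff)
  have Fm: "f (\<lambda>x. - a x) p1 \<sigma> \<noteq> 0" using h3 unfolding \<rho>_def[symmetric] Z_def ear by simp
  have e_ba: "(\<lambda>x. - b x + (b x - a x)) = (\<lambda>x. - a x)" by (simp add: fun_eq_iff)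
  have br2: "f (\<lambda>x. b x - a x) D \<sigma> * f (\<lambda>x. - b x) p1 (\<lambda>x. b x - a x + \<sigma> x) - f (\<lambda>x. - b x) p1 \<sigma> * f (\<lambda>x. b x - a x) D (\<lambda>x. - b x + \<sigma> x)
       = f (\<lambda>x. - a x) (scD ((\<lambda>x. b x - a x) p1) D - scD (- b D) p1) \<sigma>"
    using bracket_coef[OF nbG bmaG sG nb0 bma0 _ bmaD, unfolded e_ba] b1 na0 by simp
  have V2: "scD ((\<lambda>x. b x - a x) p1) D - scD (- b D) p1 = scD k p1"
    using a1 b1 bD by simp
  have "f (\<lambda>x. - a x) (scD k p1) \<sigma> = k * f (\<lambda>x. - a x) p1 \<sigma>"
    by (rule f_scale[OF naG sG na0]) (simp add: a1)
  then have br2': "f (\<lambda>x. b x - a x) D \<sigma> * f (\<lambda>x. - b x) p1 (\<lambda>x. b x - a x + \<sigma> x) - f (\<lambda>x. - b x) p1 \<sigma> * f (\<lambda>x. b x - a x) D (\<lambda>x. - b x + \<sigma> x) \<noteq> 0"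
    using br2 V2 k0 Fm by simp
  have d0: "f (\<lambda>x. - b x) p1 \<sigma> \<noteq> 0"
  proof (cases "f (\<lambda>x. - b x) p1 \<sigma> = 0")
    case True
    have etau: "(\<lambda>x. b x - a x + \<sigma> x) = (\<lambda>x. b x + \<rho> x)" by (simp add: \<rho>_def \<sigma>_def fun_eq_iff)
    have dt: "f (\<lambda>x. - b x) p1 (\<lambda>x. b x + \<rho> x) \<noteq> 0" using br2' True unfolding etau by auto
    have g0: "f b p2 \<rho> \<noteq> 0" using h4 unfolding \<rho>_def[symmetric] Z_def by simp
    have cc: "f b p2 \<rho> * f (\<lambda>x. - b x) p1 (\<lambda>x. b x + \<rho> x) = f (\<lambda>x. - b x) p1 \<rho> * f b p2 (\<lambda>x. - b x + \<rho> x)"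
      using comm_coef[OF nbG bG rG nb0 b0 _ b2] b1 b2 by simp
    have dr: "f (\<lambda>x. - b x) p1 \<rho> \<noteq> 0" using cc g0 dt by auto
    have emu: "(\<lambda>x. - b x + \<rho> x) = (\<lambda>x. \<nu> x - a x)" by (simp add: \<rho>_def fun_eq_iff)
    have Fmu: "f a p1 (\<lambda>x. \<nu> x - a x) \<noteq> 0" using h1' unfolding Z_def by simp
    have cc2: "f (\<lambda>x. - b x) p1 \<rho> * f a p1 (\<lambda>x. - b x + \<rho> x) = f a p1 \<rho> * f (\<lambda>x. - b x) p1 (\<lambda>x. a x + \<rho> x)"
      using comm_coef[OF aG nbG rG a0 nb0 a1 _ _ a1] b1 by simp
    show ?thesis using cc2 dr Fmu unfolding emu ear by auto
  qed simp
  show ?thesis unfolding Z_def using c0 d0 unfolding \<sigma>_def by simp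
qed

end

theorem lemma3p5:
  fixes scD :: "'a::field_char_0 \<Rightarrow> 'd::ab_group_add \<Rightarrow> 'd"
    and G :: "('d \<Rightarrow> 'a) set"
    and scM :: "'a \<Rightarrow> 'm::ab_group_add \<Rightarrow> 'm"
    and act :: "('d \<Rightarrow> 'a) \<Rightarrow> 'd \<Rightarrow> 'm \<Rightarrow> 'm"
    and w :: "('d \<Rightarrow> 'a) \<Rightarrow> 'm"
    and e1 e2 e3 :: "'d \<Rightarrow> 'a"
    and p1 p2 p3 :: 'd
  assumes F: "alg_closed_field TYPE('a)"
    and D: "vector_space scD" "vector_space.dim scD UNIV = 3"
    and G_lin: "\<forall>\<alpha>\<in>G. Vector_Spaces.linear scD (*) \<alpha>"
    and G_basis: "G = {(\<lambda>x. of_int a * e1 x + of_int b * e2 x + of_int c * e3 x) | a b c. True}"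
    and e_indep: "\<And>a b c :: int. (\<lambda>x. of_int a * e1 x + of_int b * e2 x + of_int c * e3 x) = (\<lambda>_. 0)
                     \<Longrightarrow> a = 0 \<and> b = 0 \<and> c = 0"
    and G_sep: "\<And>d. (\<forall>\<alpha>\<in>G. \<alpha> d = 0) \<Longrightarrow> d = 0"
    and M: "S_module scD G scM act" "graded_dim1 G scM act w"
    and p1: "p1 \<noteq> 0" "e2 p1 = 0" "e3 p1 = 0"
    and p2: "p2 \<noteq> 0" "e1 p2 = 0" "e3 p2 = 0"
    and p3: "p3 \<noteq> 0" "e1 p3 = 0" "e2 p3 = 0"
  shows "\<exists>\<nu>\<in>G.
     (act (\<lambda>x. - e2 x) p1 (act e2 p1 (w \<nu>)) \<noteq> 0 \<and> act (\<lambda>x. - e3 x) p1 (act e3 p1 (w \<nu>)) \<noteq> 0) \<or>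
     (act (\<lambda>x. - e1 x) p2 (act e1 p2 (w \<nu>)) \<noteq> 0 \<and> act (\<lambda>x. - e3 x) p2 (act e3 p2 (w \<nu>)) \<noteq> 0) \<or>
     (act (\<lambda>x. - e1 x) p3 (act e1 p3 (w \<nu>)) \<noteq> 0 \<and> act (\<lambda>x. - e2 x) p3 (act e2 p3 (w \<nu>)) \<noteq> 0) \<or>
     (act (\<lambda>x. - e3 x) p1 (act e3 p1 (w \<nu>)) = 0 \<and> act (\<lambda>x. - e3 x) p2 (act e3 p2 (w \<nu>)) = 0) \<or>
     (act (\<lambda>x. - e1 x) p2 (act e1 p2 (w \<nu>)) = 0 \<and> act (\<lambda>x. - e1 x) p3 (act e1 p3 (w \<nu>)) = 0) \<or>
     (act (\<lambda>x. - e2 x) p1 (act e2 p1 (w \<nu>)) = 0 \<and> act (\<lambda>x. - e2 x) p3 (act e2 p3 (w \<nu>)) = 0)"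
  proof -
  have Gmem: "\<And>a b c. (\<lambda>x. of_int a * e1 x + of_int b * e2 x + of_int c * e3 x) \<in> G"
    using G_basis by blast
  have Gcases: "\<And>\<alpha>. \<alpha> \<in> G \<Longrightarrow> \<exists>a b c. \<alpha> = (\<lambda>x. of_int a * e1 x + of_int b * e2 x + of_int c * e3 x)"
    using G_basis by blast
  have Gadd: "\<And>\<alpha> \<beta>. \<alpha> \<in> G \<Longrightarrow> \<beta> \<in> G \<Longrightarrow> (\<lambda>x. \<alpha> x + \<beta> x) \<in> G"
  proof -
    fix \<alpha> \<beta> assume "\<alpha> \<in> G" "\<beta> \<in> G"
    then obtain a b c a' b' c' where A: "\<alpha> = (\<lambda>x. of_int a * e1 x + of_int b * e2 x + of_int c * e3 x)"
      and B: "\<beta> = (\<lambda>x. of_int a' * e1 x + of_int b' * e2 x + of_int c' * e3 x)" using Gcases by metis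
    have eq: "(\<lambda>x. \<alpha> x + \<beta> x) = (\<lambda>x. of_int (a+a') * e1 x + of_int (b+b') * e2 x + of_int (c+c') * e3 x)"
      unfolding A B by (simp add: fun_eq_iff algebra_simps)
    show "(\<lambda>x. \<alpha> x + \<beta> x) \<in> G" unfolding eq by (rule Gmem)
  qed
  have Gneg: "\<And>\<alpha>. \<alpha> \<in> G \<Longrightarrow> (\<lambda>x. - \<alpha> x) \<in> G"
  proof -
    fix \<alpha> assume "\<alpha> \<in> G"
    then obtain a b c where A: "\<alpha> = (\<lambda>x. of_int a * e1 x + of_int b * e2 x + of_int c * e3 x)"
      using Gcases by metis
    have eq: "(\<lambda>x. - \<alpha> x) = (\<lambda>x. of_int (-a) * e1 x + of_int (-b) * e2 x + of_int (-c) * e3 x)"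
      unfolding A by (simp add: fun_eq_iff algebra_simps)
    show "(\<lambda>x. - \<alpha> x) \<in> G" unfolding eq by (rule Gmem)
  qed
  interpret S: smod scD G scM act w
  proof (rule smod.intro)
    show "vector_space scD" by (rule D(1))
    show "\<And>\<alpha>. \<alpha> \<in> G \<Longrightarrow> Vector_Spaces.linear scD (*) \<alpha>" using G_lin by blast
    show "\<And>\<alpha> \<beta>. \<alpha> \<in> G \<Longrightarrow> \<beta> \<in> G \<Longrightarrow> (\<lambda>x. \<alpha> x + \<beta> x) \<in> G" by (rule Gadd)
    show "\<And>\<alpha>. \<alpha> \<in> G \<Longrightarrow> (\<lambda>x. - \<alpha> x) \<in> G" by (rule Gneg)
    show "S_module scD G scM act" by (rule M(1))
    show "graded_dim1 G scM act w" by (rule M(2))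
  qed
  have e1G: "e1 \<in> G" using Gmem[of 1 0 0] by simp
  have e2G: "e2 \<in> G" using Gmem[of 0 1 0] by simp
  have e3G: "e3 \<in> G" using Gmem[of 0 0 1] by simp
  have zG: "(\<lambda>_. 0) \<in> G" using Gmem[of 0 0 0] by simp
  have sep: "\<And>p. e1 p = 0 \<Longrightarrow> e2 p = 0 \<Longrightarrow> e3 p = 0 \<Longrightarrow> p = 0"
  proof -
    fix p assume h: "e1 p = 0" "e2 p = 0" "e3 p = 0"
    have "\<forall>\<alpha>\<in>G. \<alpha> p = 0"
    proof
      fix \<alpha> assume "\<alpha> \<in> G"
      then obtain a b c where A: "\<alpha> = (\<lambda>x. of_int a * e1 x + of_int b * e2 x + of_int c * e3 x)"
        using Gcases by metis
      show "\<alpha> p = 0" unfolding A using h by simp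
    qed
    then show "p = 0" using G_sep by blast
  qed
  have e11: "e1 p1 \<noteq> 0" using sep p1 by blast
  have e22: "e2 p2 \<noteq> 0" using sep p2 by blast
  have e33: "e3 p3 \<noteq> 0" using sep p3 by blast
  have e10: "e1 \<noteq> (\<lambda>_. 0)" using e11 by auto
  have e20: "e2 \<noteq> (\<lambda>_. 0)" using e22 by auto
  have e30: "e3 \<noteq> (\<lambda>_. 0)" using e33 by auto
  show ?thesis
  proof (rule ccontr)
    assume H: "\<not> ?thesis"
    have pat: "(S.Z e2 p1 \<mu> \<noteq> 0 \<longleftrightarrow> S.Z e3 p2 \<mu> \<noteq> 0) \<and> (S.Z e3 p1 \<mu> \<noteq> 0 \<longleftrightarrow> S.Z e2 p1 \<mu> = 0)
       \<and> (S.Z e2 p3 \<mu> \<noteq> 0 \<longleftrightarrow> S.Z e3 p1 \<mu> \<noteq> 0)" if mG: "\<mu> \<in> G" for \<mu>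
    proof -
      note z12 = S.Z_act[OF e2G mG e20 p1(2)]
      note z13 = S.Z_act[OF e3G mG e30 p1(3)]
      note z21 = S.Z_act[OF e1G mG e10 p2(2)]
      note z23 = S.Z_act[OF e3G mG e30 p2(3)]
      note z31 = S.Z_act[OF e1G mG e10 p3(2)]
      note z32 = S.Z_act[OF e2G mG e20 p3(3)]
      have "\<not> ((S.Z e2 p1 \<mu> \<noteq> 0 \<and> S.Z e3 p1 \<mu> \<noteq> 0) \<or> (S.Z e1 p2 \<mu> \<noteq> 0 \<and> S.Z e3 p2 \<mu> \<noteq> 0) \<or>
              (S.Z e1 p3 \<mu> \<noteq> 0 \<and> S.Z e2 p3 \<mu> \<noteq> 0) \<or> (S.Z e3 p1 \<mu> = 0 \<and> S.Z e3 p2 \<mu> = 0) \<or>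
              (S.Z e1 p2 \<mu> = 0 \<and> S.Z e1 p3 \<mu> = 0) \<or> (S.Z e2 p1 \<mu> = 0 \<and> S.Z e2 p3 \<mu> = 0))"
      proof -
        have Hm: "\<not> ((act (\<lambda>x. - e2 x) p1 (act e2 p1 (w \<mu>)) \<noteq> 0 \<and> act (\<lambda>x. - e3 x) p1 (act e3 p1 (w \<mu>)) \<noteq> 0) \<or>
     (act (\<lambda>x. - e1 x) p2 (act e1 p2 (w \<mu>)) \<noteq> 0 \<and> act (\<lambda>x. - e3 x) p2 (act e3 p2 (w \<mu>)) \<noteq> 0) \<or>
     (act (\<lambda>x. - e1 x) p3 (act e1 p3 (w \<mu>)) \<noteq> 0 \<and> act (\<lambda>x. - e2 x) p3 (act e2 p3 (w \<mu>)) \<noteq> 0) \<or>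
     (act (\<lambda>x. - e3 x) p1 (act e3 p1 (w \<mu>)) = 0 \<and> act (\<lambda>x. - e3 x) p2 (act e3 p2 (w \<mu>)) = 0) \<or>
     (act (\<lambda>x. - e1 x) p2 (act e1 p2 (w \<mu>)) = 0 \<and> act (\<lambda>x. - e1 x) p3 (act e1 p3 (w \<mu>)) = 0) \<or>
     (act (\<lambda>x. - e2 x) p1 (act e2 p1 (w \<mu>)) = 0 \<and> act (\<lambda>x. - e2 x) p3 (act e2 p3 (w \<mu>)) = 0))"
        proof
          assume X: "(act (\<lambda>x. - e2 x) p1 (act e2 p1 (w \<mu>)) \<noteq> 0 \<and> act (\<lambda>x. - e3 x) p1 (act e3 p1 (w \<mu>)) \<noteq> 0) \<or>
     (act (\<lambda>x. - e1 x) p2 (act e1 p2 (w \<mu>)) \<noteq> 0 \<and> act (\<lambda>x. - e3 x) p2 (act e3 p2 (w \<mu>)) \<noteq> 0) \<or>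
     (act (\<lambda>x. - e1 x) p3 (act e1 p3 (w \<mu>)) \<noteq> 0 \<and> act (\<lambda>x. - e2 x) p3 (act e2 p3 (w \<mu>)) \<noteq> 0) \<or>
     (act (\<lambda>x. - e3 x) p1 (act e3 p1 (w \<mu>)) = 0 \<and> act (\<lambda>x. - e3 x) p2 (act e3 p2 (w \<mu>)) = 0) \<or>
     (act (\<lambda>x. - e1 x) p2 (act e1 p2 (w \<mu>)) = 0 \<and> act (\<lambda>x. - e1 x) p3 (act e1 p3 (w \<mu>)) = 0) \<or>
     (act (\<lambda>x. - e2 x) p1 (act e2 p1 (w \<mu>)) = 0 \<and> act (\<lambda>x. - e2 x) p3 (act e2 p3 (w \<mu>)) = 0)"
          have "\<exists>\<nu>\<in>G. (act (\<lambda>x. - e2 x) p1 (act e2 p1 (w \<nu>)) \<noteq> 0 \<and> act (\<lambda>x. - e3 x) p1 (act e3 p1 (w \<nu>)) \<noteq> 0) \<or>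
     (act (\<lambda>x. - e1 x) p2 (act e1 p2 (w \<nu>)) \<noteq> 0 \<and> act (\<lambda>x. - e3 x) p2 (act e3 p2 (w \<nu>)) \<noteq> 0) \<or>
     (act (\<lambda>x. - e1 x) p3 (act e1 p3 (w \<nu>)) \<noteq> 0 \<and> act (\<lambda>x. - e2 x) p3 (act e2 p3 (w \<nu>)) \<noteq> 0) \<or>
     (act (\<lambda>x. - e3 x) p1 (act e3 p1 (w \<nu>)) = 0 \<and> act (\<lambda>x. - e3 x) p2 (act e3 p2 (w \<nu>)) = 0) \<or>
     (act (\<lambda>x. - e1 x) p2 (act e1 p2 (w \<nu>)) = 0 \<and> act (\<lambda>x. - e1 x) p3 (act e1 p3 (w \<nu>)) = 0) \<or>
     (act (\<lambda>x. - e2 x) p1 (act e2 p1 (w \<nu>)) = 0 \<and> act (\<lambda>x. - e2 x) p3 (act e2 p3 (w \<nu>)) = 0)"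
            using X mG by (rule bexI[where x=\<mu>])
          with H show False by contradiction
        qed
        show ?thesis using Hm unfolding z12[unfolded Not_eq_iff] z13[unfolded Not_eq_iff] z21[unfolded Not_eq_iff] z23[unfolded Not_eq_iff] z31[unfolded Not_eq_iff] z32[unfolded Not_eq_iff] .
      qed
      then show ?thesis by blast
    qed
    have nmG: "\<And>\<alpha>. \<alpha> \<in> G \<Longrightarrow> (\<lambda>x. - \<alpha> x) \<in> G" by (rule Gneg)
    have dG: "\<And>\<alpha> \<beta>. \<alpha> \<in> G \<Longrightarrow> \<beta> \<in> G \<Longrightarrow> (\<lambda>x. \<alpha> x - \<beta> x) \<in> G" by (rule S.Gdiff)
    have m2G: "(\<lambda>x. - e2 x) \<in> G" using Gneg e2G by blast
    have m3G: "(\<lambda>x. - e3 x) \<in> G" using Gneg e3G by blast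
    have d23G: "(\<lambda>x. e2 x - e3 x) \<in> G" using dG e2G e3G by blast
    have d32G: "(\<lambda>x. e3 x - e2 x) \<in> G" using dG e2G e3G by blast
    note sh12 = S.Z_shift[OF e2G _ e20 p1(2)]
    note sh13 = S.Z_shift[OF e3G _ e30 p1(3)]
    note sh23 = S.Z_shift[OF e3G _ e30 p2(3)]
    note sh32 = S.Z_shift[OF e2G _ e20 p3(3)]
    show False
    proof (cases "S.Z e2 p1 (\<lambda>_. 0) = 0")
      case False
      have h1': "S.Z e2 p1 (\<lambda>x. - e2 x) \<noteq> 0" using sh12[OF m2G] False by simp
      have "S.Z e3 p2 (\<lambda>_. 0) \<noteq> 0" using pat[OF zG] False by blast
      then have "S.Z e3 p2 (\<lambda>x. - e3 x) \<noteq> 0" using sh23[OF m3G] by simp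
      then have "S.Z e2 p1 (\<lambda>x. - e3 x) \<noteq> 0" using pat[OF m3G] by blast
      then have "S.Z e2 p1 (\<lambda>x. e2 x - e3 x) \<noteq> 0" using sh12[OF m3G] by simp
      then have h2: "S.Z e3 p2 (\<lambda>x. e2 x - e3 x) \<noteq> 0" using pat[OF d23G] by blast
      have "S.Z e3 p2 (\<lambda>x. - e2 x) \<noteq> 0" using pat[OF m2G] h1' by blast
      then have h4: "S.Z e3 p2 (\<lambda>x. e3 x - e2 x) \<noteq> 0" using sh23[OF m2G] by simp
      then have h3: "S.Z e2 p1 (\<lambda>x. e3 x - e2 x) \<noteq> 0" using pat[OF d32G] by blast
      have "S.Z e3 p1 (\<lambda>_. 0) \<noteq> 0"
        using S.core[OF e2G e3G zG p1(2) p1(3) p2(3) p3(3) e22 e33] False h1' h2 h3 h4 by simp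
      then show False using pat[OF zG] False by blast
    next
      case True
      have z13: "S.Z e3 p1 (\<lambda>_. 0) \<noteq> 0" using pat[OF zG] True by blast
      have h1': "S.Z e3 p1 (\<lambda>x. - e3 x) \<noteq> 0" using sh13[OF m3G] z13 by simp
      have "S.Z e2 p3 (\<lambda>_. 0) \<noteq> 0" using pat[OF zG] z13 by blast
      then have "S.Z e2 p3 (\<lambda>x. - e2 x) \<noteq> 0" using sh32[OF m2G] by simp
      then have "S.Z e3 p1 (\<lambda>x. - e2 x) \<noteq> 0" using pat[OF m2G] by blast
      then have "S.Z e3 p1 (\<lambda>x. e3 x - e2 x) \<noteq> 0" using sh13[OF m2G] by simp
      then have h2: "S.Z e2 p3 (\<lambda>x. e3 x - e2 x) \<noteq> 0" using pat[OF d32G] by blast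
      have "S.Z e2 p3 (\<lambda>x. - e3 x) \<noteq> 0" using pat[OF m3G] h1' by blast
      then have h4: "S.Z e2 p3 (\<lambda>x. e2 x - e3 x) \<noteq> 0" using sh32[OF m3G] by simp
      then have h3: "S.Z e3 p1 (\<lambda>x. e2 x - e3 x) \<noteq> 0" using pat[OF d23G] by blast
      have "S.Z e2 p1 (\<lambda>_. 0) \<noteq> 0"
        using S.core[OF e3G e2G zG p1(3) p1(2) p3(3) p2(3) e33 e22] z13 h1' h2 h3 h4 by simp
      then show False using True by blast
    qed
  qed
qed

end
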